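(* Let $q=3^m$ with $m\ge1$ and $f(x)=x^{q+2}$ on $\mathbb{F}_{q^2}$. As $(a,b)$ runs through $\mathbb{F}_{q^2}\times\mathbb{F}_{q^2}^*$, the Walsh transform $W_f(a,b)$ takes the value $-q$ exactly $\frac{q^4-q^3-q^2+q}{3}$ times, the value $0$ exactly $\frac{q^4-q^3-q^2+q}{2}$ times, the value $q$ exactly $q^3-q$ times, and the value $2q$ exactly $\frac{q^4-q^3-q^2+q}{6}$ times.
   Context: For $f:\mathbb{F}_{q^2}\to\mathbb{F}_{q^2}$, the Walsh transform is $W_f(a,b)=\sum_{x\in\mathbb{F}_{q^2}}\xi_3^{\mathrm{Tr}_{\mathbb{F}_{q^2}/\mathbb{F}_3}(bf(x)-ax)}$, where $\xi_3=e^{2\pi i/3}$ and $\mathrm{Tr}_{\mathbb{F}_{q^2}/\mathbb{F}_3}$ is the absolute trace. *)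

theory Defs
  imports Complex_Main
begin

text \<open>A finite field of order 3^n is modelled as a type 'a of class field and finite
with CARD('a) = 3^n. The absolute trace to the prime field F_3 is
Tr(x) = sum_{i<n} x^(3^i).\<close>

definition abs_trace :: "nat \<Rightarrow> 'a::field \<Rightarrow> 'a" where
  "abs_trace n x = (\<Sum>i<n. x ^ (3 ^ i))"

definition prime_field_val :: "'a::field \<Rightarrow> nat" where
  "prime_field_val y = (THE k. k < 3 \<and> of_nat k = y)"

text \<open>Walsh transform W_f(a,b) = sum_x xi_3^(Tr(b f(x) - a x)), xi_3 = exp(2 pi i/3);
n is the degree of the field over F_3.\<close>
definition walsh :: "nat \<Rightarrow> ('a::{field,finite} \<Rightarrow> 'a) \<Rightarrow> 'a \<Rightarrow> 'a \<Rightarrow> complex" where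
  "walsh n f a b = (\<Sum>x\<in>UNIV.
      cis (2 * pi / 3) ^ prime_field_val (abs_trace n (b * f x - a * x)))"

end

theory Submission
  imports Defs "HOL-Computational_Algebra.Polynomial"
begin

lemma frob3:
  fixes x y :: "'a::field"
  assumes "(3::'a) = 0"
  shows "(x+y)^3 = x^3 + y^3"
proof -
  have "(x+y)^3 = x^3 + y^3 + 3*(x*x*y + x*y*y)"
    by (simp add: power3_eq_cube algebra_simps)
  thus ?thesis using assms by simp
qed

lemma frobk:
  fixes x y :: "'a::field"
  assumes "(3::'a) = 0"
  shows "(x+y)^(3^k) = x^(3^k) + y^(3^k)"
proof (induction k)
  case 0 then show ?case by simp
next
  case (Suc k)
  have "(x+y)^(3^Suc k) = ((x+y)^(3^k))^3" by (simp add: power_mult[symmetric] mult.commute)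
  also have "\<dots> = (x^(3^k))^3 + (y^(3^k))^3" using Suc frob3[OF assms] by simp
  also have "\<dots> = x^(3^Suc k) + y^(3^Suc k)" by (simp add: power_mult[symmetric] mult.commute)
  finally show ?case .
qed

lemma frob_neg:
  fixes x :: "'a::field"
  shows "(-x)^(3^k) = -(x^(3^k))"
proof -
  have "odd ((3::nat)^k)" by simp
  thus ?thesis by (simp add: power_minus_odd)
qed

lemma frob_diff:
  fixes x y :: "'a::field"
  assumes "(3::'a) = 0"
  shows "(x-y)^(3^k) = x^(3^k) - y^(3^k)"
  using frobk[OF assms, of x "-y" k] frob_neg[of y k] by simp

lemma frob_sum:
  fixes f :: "'b \<Rightarrow> 'a::field"
  assumes "(3::'a) = 0" "finite A"
  shows "(\<Sum>i\<in>A. f i)^(3^k) = (\<Sum>i\<in>A. (f i)^(3^k))"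
  using assms(2) by (induction A rule: finite_induct) (auto simp: frobk[OF assms(1)])

lemma of_nat_card_zero:
  shows "of_nat (card (UNIV::'a::{ring_1,finite} set)) = (0::'a)"
proof -
  have "(\<Sum>x\<in>UNIV. x) = (\<Sum>x\<in>UNIV. (x + (1::'a)))"
    by (rule sum.reindex_bij_witness[of _ "\<lambda>x. x + 1" "\<lambda>x. x - 1"]) auto
  also have "\<dots> = (\<Sum>x\<in>UNIV. x) + of_nat (card (UNIV::'a set))"
    by (simp add: sum.distrib)
  finally show ?thesis by simp
qed

lemma fermat_ff:
  fixes x :: "'a::{field,finite}"
  shows "x ^ card (UNIV::'a set) = x"
proof (cases "x = 0")
  case True then show ?thesis by (simp add: zero_power finite_UNIV_card_ge_0)
next
  case False
  let ?S = "UNIV - {0::'a}"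
  have inj: "inj_on (\<lambda>y. x*y) ?S" using False by (auto simp: inj_on_def)
  have img: "(\<lambda>y. x*y) ` ?S = ?S"
  proof
    show "(\<lambda>y. x*y) ` ?S \<subseteq> ?S" using False by auto
    show "?S \<subseteq> (\<lambda>y. x*y) ` ?S"
    proof
      fix z assume "z \<in> ?S"
      then have "z = x * (z/x)" "z/x \<in> ?S" using False by auto
      thus "z \<in> (\<lambda>y. x*y) ` ?S" by blast
    qed
  qed
  have "(\<Prod>y\<in>?S. x*y) = (\<Prod>y\<in>?S. y)"
    using prod.reindex[OF inj, of id] img by simp
  moreover have "(\<Prod>y\<in>?S. x*y) = x^card ?S * (\<Prod>y\<in>?S. y)"
    by (simp add: prod.distrib)
  moreover have "(\<Prod>y\<in>?S. y) \<noteq> 0" by simp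
  ultimately have "x^card ?S = 1" by simp
  moreover have "card ?S + 1 = card (UNIV::'a set)"
    using finite_UNIV_card_ge_0[where 'a='a] by (simp add: card_Diff_singleton)
  ultimately show ?thesis by (metis power_add power_one_right mult_1_left)
qed


definition omega :: complex where "omega = cis (2*pi/3)"
definition chi :: "'a::field \<Rightarrow> complex" where "chi y = omega ^ prime_field_val y"
definition psi :: "nat \<Rightarrow> 'a::field \<Rightarrow> complex" where "psi n x = chi (abs_trace n x)"

lemma omega3: "omega ^ 3 = 1"
  unfolding omega_def DeMoivre by simp

lemma omega_sum: "1 + omega + omega^2 = 0"
proof -
  have "Re omega = -1/2" unfolding omega_def using cos_120 by simp
  hence ne: "omega \<noteq> 1" by auto
  have "(omega - 1) * (1 + omega + omega^2) = omega^3 - 1"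
    by (simp add: algebra_simps power2_eq_square power3_eq_cube)
  also have "\<dots> = 0" using omega3 by simp
  finally show ?thesis using ne by simp
qed

lemma omega_ne1: "omega \<noteq> 1" and omega2_ne1: "omega^2 \<noteq> 1"
proof -
  have "Re omega = -1/2" unfolding omega_def using cos_120 by simp
  thus "omega \<noteq> 1" by auto
  show "omega^2 \<noteq> 1"
  proof
    assume "omega^2 = 1"
    hence "omega^3 = omega" by (simp add: power3_eq_cube power2_eq_square)
    thus False using omega3 \<open>omega \<noteq> 1\<close> by simp
  qed
qed


context
  fixes m q :: nat
  assumes m1: "m \<ge> 1" and qd: "q = 3^m" and cardK: "card (UNIV::'a::{field,finite} set) = q^2"
begin

lemma card3: "card (UNIV::'a set) = 3^(2*m)"
  using cardK qd by (simp add: power_mult[symmetric] mult.commute)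

lemma char3: "(3::'a) = 0"
proof -
  have "of_nat (3^(2*m)) = (0::'a)" using of_nat_card_zero[where 'a='a] card3 by simp
  hence "(3::'a)^(2*m) = 0" by simp
  thus ?thesis by simp
qed

lemma two_ne0: "(2::'a) \<noteq> 0"
proof
  assume "(2::'a) = 0"
  have "(3::'a) = 2 + 1" by simp
  thus False using \<open>(2::'a) = 0\<close> char3 by simp
qed

lemma two_eq: "(2::'a) = -1"
  using char3 by (simp add: eq_neg_iff_add_eq_0)

lemma fermat3: "(x::'a) ^ (3^(2*m)) = x"
  using fermat_ff[of x] card3 by simp

lemma fermatq: "((x::'a) ^ q) ^ q = x"
  using fermat_ff[of x] cardK by (simp add: power_mult[symmetric] power2_eq_square)

lemma q_pow: "q = 3^m" by (rule qd)

lemma sig_add: "((x::'a) + y)^q = x^q + y^q"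
  using frobk[OF char3] qd by simp
lemma sig_neg: "(-(x::'a))^q = -(x^q)"
  using frob_neg qd by simp
lemma sig_diff: "((x::'a) - y)^q = x^q - y^q"
  using frob_diff[OF char3] qd by simp

abbreviation Tr :: "'a \<Rightarrow> 'a" where "Tr \<equiv> abs_trace (2*m)"

lemma tr_add: "Tr (x + y) = Tr x + Tr y"
  unfolding abs_trace_def by (simp add: frobk[OF char3] sum.distrib)

lemma tr_neg: "Tr (- x) = - Tr x"
  unfolding abs_trace_def by (simp add: frob_neg sum_negf)

lemma tr_diff: "Tr (x - y) = Tr x - Tr y"
  using tr_add[of x "-y"] tr_neg[of y] by simp

lemma tr_zero: "Tr 0 = 0"
  unfolding abs_trace_def using m1 by (simp add: power_0_left)

lemma tr_cube: "Tr (x^3) = Tr x"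
proof -
  have "Tr (x^3) = (\<Sum>i<2*m. x^(3^Suc i))"
    unfolding abs_trace_def by (simp add: power_mult[symmetric] mult.commute)
  also have "\<dots> = (\<Sum>i<Suc (2*m). x^(3^i)) - x"
    by (subst sum.lessThan_Suc_shift) simp
  also have "\<dots> = Tr x + x^(3^(2*m)) - x"
    unfolding abs_trace_def by simp
  also have "\<dots> = Tr x" using fermat3 by simp
  finally show ?thesis .
qed

lemma tr_pow3: "Tr (x^(3^k)) = Tr x"
proof (induction k)
  case 0 then show ?case by simp
next
  case (Suc k)
  have "x^(3^Suc k) = (x^(3^k))^3" by (simp add: power_mult[symmetric] mult.commute)
  then show ?case using tr_cube Suc by simp
qed

lemma tr_sig: "Tr (x^q) = Tr x"
  using tr_pow3 qd by simp

lemma tr_cubed: "(Tr x)^3 = Tr x"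
proof -
  have "(Tr x)^3 = (\<Sum>i<2*m. (x^(3^i))^(3^1))"
    unfolding abs_trace_def using frob_sum[OF char3, of "{..<2*m}" _ 1] by simp
  also have "\<dots> = (\<Sum>i<2*m. (x^3)^(3^i))"
    by (simp add: power_mult[symmetric] mult.commute)
  also have "\<dots> = Tr (x^3)" unfolding abs_trace_def ..
  finally show ?thesis using tr_cube by simp
qed

lemma cube_eq_vals:
  fixes t :: 'a
  assumes "t^3 = t"
  shows "t = 0 \<or> t = 1 \<or> t = 2"
proof -
  have "t * (t - 1) * (t + 1) = t^3 - t" by (simp add: algebra_simps power3_eq_cube)
  hence "t * (t - 1) * (t + 1) = 0" using assms by simp
  hence "t = 0 \<or> t = 1 \<or> t = -1" by (auto simp: eq_neg_iff_add_eq_0)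
  thus ?thesis using two_eq by auto
qed

lemma tr_vals: "Tr x = 0 \<or> Tr x = 1 \<or> Tr x = 2"
  using cube_eq_vals tr_cubed by blast

lemma distinct012: "(0::'a) \<noteq> 1" "(0::'a) \<noteq> 2" "(1::'a) \<noteq> 2"
proof -
  show "(0::'a) \<noteq> 1" by simp
  show "(0::'a) \<noteq> 2" using two_ne0 by metis
  show "(1::'a) \<noteq> 2"
  proof
    assume "(1::'a) = 2" hence "(2::'a) - 1 = 0" by simp
    thus False by simp
  qed
qed

lemma pfv0: "prime_field_val (0::'a) = 0"
  unfolding prime_field_val_def
proof (rule the_equality)
  fix k assume "k < 3 \<and> of_nat k = (0::'a)"
  then show "k = 0" using distinct012 by (auto simp: less_Suc_eq numeral_3_eq_3)
qed simp

lemma pfv1: "prime_field_val (1::'a) = 1"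
  unfolding prime_field_val_def
proof (rule the_equality)
  fix k assume "k < 3 \<and> of_nat k = (1::'a)"
  then show "k = 1" using distinct012 by (auto simp: less_Suc_eq numeral_3_eq_3)
qed simp

lemma pfv2: "prime_field_val (2::'a) = 2"
  unfolding prime_field_val_def
proof (rule the_equality)
  fix k assume "k < 3 \<and> of_nat k = (2::'a)"
  then show "k = 2" using distinct012 by (auto simp: less_Suc_eq numeral_3_eq_3)
qed simp

lemma chi0: "chi (0::'a) = 1" and chi1: "chi (1::'a) = omega" and chi2: "chi (2::'a) = omega^2"
  unfolding chi_def by (simp_all add: pfv0 pfv1 pfv2)

lemma chi_add:
  fixes s t :: 'a
  assumes "s = 0 \<or> s = 1 \<or> s = 2" "t = 0 \<or> t = 1 \<or> t = 2"
  shows "chi (s + t) = chi s * chi t"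
proof -
  have e1: "(1::'a) + 2 = 0" "(2::'a) + 1 = 0"
  proof -
    have "(1::'a) + 2 = 3" by simp
    thus "(1::'a) + 2 = 0" using char3 by simp
    thus "(2::'a) + 1 = 0" by (simp add: add.commute)
  qed
  have e2: "(2::'a) + 2 = 1"
  proof -
    have "(2::'a) + 2 = 3 + 1" by simp
    thus ?thesis using char3 by simp
  qed
  have e3: "(1::'a) + 1 = 2" by simp
  have o4: "omega^2 * omega^2 = omega"
  proof -
    have "omega^2 * omega^2 = omega^3 * omega" by (simp add: power3_eq_cube power2_eq_square mult.assoc)
    thus ?thesis using omega3 by simp
  qed
  have o3: "omega * omega^2 = 1" "omega^2 * omega = 1"
  proof -
    have "omega * omega^2 = omega^3" "omega^2 * omega = omega^3" by (simp_all add: power3_eq_cube power2_eq_square)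
    thus "omega * omega^2 = 1" "omega^2 * omega = 1" using omega3 by simp_all
  qed
  have o2: "omega * omega = omega^2" by (simp add: power2_eq_square)
  from assms(1) show ?thesis
  proof (elim disjE)
    assume s: "s = 0" show ?thesis using s chi0 by simp
  next
    assume s: "s = 1"
    from assms(2) show ?thesis
      by (elim disjE) (simp_all only: s chi0 chi1 chi2 e1 e2 e3 o2 o3 o4 add_0_right mult_1_right)
  next
    assume s: "s = 2"
    from assms(2) show ?thesis
      by (elim disjE) (simp_all only: s chi0 chi1 chi2 e1 e2 e3 o2 o3 o4 add_0_right mult_1_right)
  qed
qed

lemma psi_add: "psi (2*m) (x + y) = psi (2*m) x * psi (2*m) (y::'a)"
  unfolding psi_def tr_add using chi_add tr_vals by blast

lemma psi_zero: "psi (2*m) (0::'a) = 1"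
  unfolding psi_def tr_zero chi0 ..

lemma psi_eq1: "psi (2*m) (x::'a) = 1 \<longleftrightarrow> Tr x = 0"
  unfolding psi_def using tr_vals[of x] chi0 chi1 chi2 omega_ne1 omega2_ne1 by auto

lemma psi_pm: "psi (2*m) (x::'a) + psi (2*m) (-x) = (if Tr x = 0 then 2 else -1)"
proof -
  have n1: "-(1::'a) = 2" "-(2::'a) = 1" using two_eq by simp_all
  have os: "omega + omega^2 = -1" "omega^2 + omega = -1" using omega_sum
    by (simp_all add: eq_neg_iff_add_eq_0 algebra_simps)
  consider "Tr x = 0" | "Tr x = 1" | "Tr x = 2" using tr_vals by blast
  then show ?thesis
  proof cases
    case 1 then show ?thesis unfolding psi_def tr_neg by (simp add: chi0)
  next
    case 2
    have c: "chi (-(1::'a)) = omega^2" unfolding n1 by (rule chi2)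
    from 2 show ?thesis unfolding psi_def tr_neg using c chi1 os by simp
  next
    case 3
    have c: "chi (-(2::'a)) = omega" unfolding n1 by (rule chi1)
    from 3 show ?thesis unfolding psi_def tr_neg using c chi2 os distinct012 by simp
  qed
qed

end

lemma trpoly_deg: "degree (\<Sum>i<k. monom (1::'a::field) (3^i)) < 3^k"
proof (induction k)
  case 0 then show ?case by simp
next
  case (Suc k)
  have "degree (\<Sum>i<Suc k. monom (1::'a) (3^i)) \<le> max (degree (\<Sum>i<k. monom (1::'a) (3^i))) (degree (monom (1::'a) (3^k)))"
    by (simp add: degree_add_le_max)
  also have "\<dots> \<le> 3^k" using Suc by (simp add: degree_monom_eq)
  finally have "degree (\<Sum>i<Suc k. monom (1::'a) (3^i)) \<le> 3^k" .
  moreover have "(3::nat)^k < 3^Suc k" by simp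
  ultimately show ?case by linarith
qed

lemma trpoly_deg_eq:
  assumes "k \<ge> 1"
  shows "degree (\<Sum>i<k. monom (1::'a::field) (3^i)) = 3^(k-1)"
proof -
  obtain j where k: "k = Suc j" using assms by (cases k) auto
  have "degree ((\<Sum>i<j. monom (1::'a) (3^i)) + monom 1 (3^j)) = degree (monom (1::'a) (3^j))"
    by (rule degree_add_eq_right) (use trpoly_deg[of j] in \<open>simp add: degree_monom_eq\<close>)
  thus ?thesis using k by (simp add: degree_monom_eq)
qed

lemma poly_trpoly: "poly (\<Sum>i<k. monom (1::'a::field) (3^i)) x = (\<Sum>i<k. x^(3^i))"
  by (simp add: poly_sum poly_monom)

lemma nat_mult_eq_le_imp_eq:
  fixes a b r :: nat
  assumes "a * b = r * r" "a \<le> r" "b \<le> r"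
  shows "a = r \<and> b = r"
proof (cases "r = 0")
  case True thus ?thesis using assms by simp
next
  case False
  have 1: "a*b \<le> a*r" using assms(3) by (rule mult_le_mono2)
  have 2: "a*r \<le> r*r" using assms(2) by (rule mult_le_mono1)
  have "a * r = r*r" using 1 2 assms(1) by linarith
  hence a: "a = r" using False by simp
  hence "r * b = r * r" using assms(1) by simp
  hence "b = r" using False by simp
  thus ?thesis using a by simp
qed

context
  fixes m q :: nat
  assumes m1: "m \<ge> 1" and qd: "q = 3^m" and cardK: "card (UNIV::'a::{field,finite} set) = q^2"
begin

lemma tr_nonzero_exists: "\<exists>x::'a. abs_trace (2*m) x \<noteq> 0"
proof (rule ccontr)
  assume "\<not> ?thesis"
  hence all: "\<forall>x::'a. poly (\<Sum>i<2*m. monom (1::'a) (3^i)) x = 0"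
    by (simp add: poly_trpoly abs_trace_def)
  have dg: "degree (\<Sum>i<2*m. monom (1::'a) (3^i)) = 3^(2*m-1)"
    using trpoly_deg_eq[of "2*m", where 'a='a] m1 by simp
  hence nz: "(\<Sum>i<2*m. monom (1::'a) (3^i)) \<noteq> 0" by (intro notI) simp
  have "card (UNIV::'a set) \<le> 3^(2*m-1)"
    using card_poly_roots_bound[OF nz] all dg by simp
  moreover have "card (UNIV::'a set) = 3^(2*m)" using card3[OF m1 qd cardK] .
  moreover have "(3::nat)^(2*m-1) < 3^(2*m)" by (rule power_strict_increasing) (use m1 in auto)
  ultimately show False by linarith
qed

lemma orth:
  fixes a :: 'a
  shows "(\<Sum>x\<in>UNIV. psi (2*m) (a * x)) = (if a = 0 then of_nat (q^2) else 0)"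
proof (cases "a = 0")
  case True then show ?thesis using psi_zero[OF m1 qd cardK] cardK by simp
next
  case False
  obtain x0 :: 'a where x0: "abs_trace (2*m) x0 \<noteq> 0" using tr_nonzero_exists by blast
  let ?z = "x0 / a"
  have p: "psi (2*m) (a * ?z) \<noteq> 1" using psi_eq1[OF m1 qd cardK] x0 False by simp
  have "(\<Sum>x\<in>UNIV. psi (2*m) (a * x)) = (\<Sum>x\<in>UNIV. psi (2*m) (a * (x + ?z)))"
    by (rule sum.reindex_bij_witness[of _ "\<lambda>x. x + ?z" "\<lambda>x. x - ?z"]) auto
  also have "\<dots> = (\<Sum>x\<in>UNIV. psi (2*m) (a * ?z) * psi (2*m) (a * x))"
  proof (rule sum.cong[OF refl])
    fix x show "psi (2*m) (a * (x + ?z)) = psi (2*m) (a * ?z) * psi (2*m) (a * x)"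
      unfolding distrib_left psi_add[OF m1 qd cardK] by (simp add: mult.commute)
  qed
  also have "\<dots> = psi (2*m) (a * ?z) * (\<Sum>x\<in>UNIV. psi (2*m) (a * x))"
    by (simp add: sum_distrib_left)
  finally have "(1 - psi (2*m) (a * ?z)) * (\<Sum>x\<in>UNIV. psi (2*m) (a * x)) = 0"
    by (simp add: algebra_simps)
  thus ?thesis using p False by simp
qed

abbreviation Fs :: "'a set" where "Fs \<equiv> {u. u^q = u}"
abbreviation Ds :: "'a set" where "Ds \<equiv> {v. v^q = - v}"

lemma q_ge3: "q \<ge> 3"
proof -
  have "(3::nat)^1 \<le> 3^m" by (rule power_increasing) (use m1 in auto)
  thus ?thesis using qd by simp
qed

lemma card_F_le: "card Fs \<le> q"
proof -
  let ?p = "monom (1::'a) q + [:0, -1:]"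
  have dg: "degree ?p = q"
    by (subst degree_add_eq_left) (use q_ge3 in \<open>auto simp: degree_monom_eq\<close>)
  hence nz: "?p \<noteq> 0" using q_ge3 by (intro notI) simp
  have "{x. poly ?p x = 0} = Fs" by (auto simp: poly_monom)
  thus ?thesis using card_poly_roots_bound[OF nz] dg by simp
qed

lemma card_D_le: "card Ds \<le> q"
proof -
  let ?p = "monom (1::'a) q + [:0, 1:]"
  have dg: "degree ?p = q"
    by (subst degree_add_eq_left) (use q_ge3 in \<open>auto simp: degree_monom_eq\<close>)
  hence nz: "?p \<noteq> 0" using q_ge3 by (intro notI) simp
  have "{x. poly ?p x = 0} = Ds" by (auto simp: poly_monom eq_neg_iff_add_eq_0)
  thus ?thesis using card_poly_roots_bound[OF nz] dg by simp
qed

lemmas sig_add_D = sig_add[OF m1 qd cardK] and sig_neg_D = sig_neg[OF m1 qd cardK]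
  and sig_diff_D = sig_diff[OF m1 qd cardK] and fermatq_D = fermatq[OF m1 qd cardK]
  and two_eq_D = two_eq[OF m1 qd cardK] and two_ne0_D = two_ne0[OF m1 qd cardK]
  and char3_D = char3[OF m1 qd cardK]

lemma decomp_bij: "bij_betw (\<lambda>(u,v). u + v) (Fs \<times> Ds) (UNIV::'a set)"
proof (rule bij_betw_byWitness[where f' = "\<lambda>x. (-(x + x^q), x^q - x)"])
  show "(\<lambda>(u,v). u + v) ` (Fs \<times> Ds) \<subseteq> UNIV" by simp
  have "(-(x + x^q), x^q - x) \<in> Fs \<times> Ds" for x :: 'a
  proof -
    have "(-(x + x^q))^q = -(x + x^q)" unfolding sig_neg_D sig_add_D fermatq_D by (simp add: add.commute)
    moreover have "(x^q - x)^q = -(x^q - x)" unfolding sig_diff_D fermatq_D by simp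
    ultimately show "(-(x + x^q), x^q - x) \<in> Fs \<times> Ds" by simp
  qed
  thus "(\<lambda>x. (-(x + x^q), x^q - x)) ` UNIV \<subseteq> Fs \<times> Ds" by blast
  show "\<forall>p\<in>Fs \<times> Ds. (\<lambda>x. (-(x + x^q), x^q - x)) ((\<lambda>(u,v). u + v) p) = p"
  proof
    fix p assume hp: "p \<in> Fs \<times> Ds"
    obtain u v where p: "p = (u,v)" "u^q = u" "v^q = -v" using hp by (cases p) auto
    have "-(u + v + (u + v)^q) = -(2*u)" using p sig_add_D by simp
    also have "\<dots> = u" using two_eq_D by simp
    finally have 1: "-(u + v + (u + v)^q) = u" .
    have "(u + v)^q - (u + v) = -(2*v)" using p sig_add_D by simp
    also have "\<dots> = v" using two_eq_D by simp
    finally have 2: "(u + v)^q - (u + v) = v" .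
    show "(\<lambda>x. (-(x + x^q), x^q - x)) ((\<lambda>(u,v). u + v) p) = p" using p 1 2 by simp
  qed
  have hx: "-(x + x^q) + (x^q - x) = x" for x :: 'a
  proof -
    have "-(x + x^q) + (x^q - x) = -(2*x)" by simp
    also have "\<dots> = x" using two_eq_D by simp
    finally show ?thesis .
  qed
  show "\<forall>x\<in>(UNIV::'a set). (\<lambda>(u,v). u + v) ((\<lambda>x. (-(x + x^q), x^q - x)) x) = x"
    using hx by (metis (no_types, lifting) case_prod_conv)
qed

lemma card_F: "card Fs = q" and card_D: "card Ds = q"
proof -
  have "card (Fs \<times> Ds) = card (UNIV::'a set)" using bij_betw_same_card[OF decomp_bij] .
  hence "card Fs * card Ds = q * q" using cardK by (simp add: card_cartesian_product power2_eq_square)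
  thus "card Fs = q" "card Ds = q" using card_F_le card_D_le
    using nat_mult_eq_le_imp_eq by blast+
qed

end

context
  fixes m q :: nat
  assumes m1: "m \<ge> 1" and qd: "q = 3^m" and cardK: "card (UNIV::'a::{field,finite} set) = q^2"
begin

lemmas sig_add_E = sig_add[OF m1 qd cardK] and sig_neg_E = sig_neg[OF m1 qd cardK]
  and sig_diff_E = sig_diff[OF m1 qd cardK] and fermatq_E = fermatq[OF m1 qd cardK]
  and two_eq_E = two_eq[OF m1 qd cardK] and two_ne0_E = two_ne0[OF m1 qd cardK]
  and char3_E = char3[OF m1 qd cardK] and tr_add_E = tr_add[OF m1 qd cardK]
  and tr_neg_E = tr_neg[OF m1 qd cardK] and tr_diff_E = tr_diff[OF m1 qd cardK]
  and tr_sig_E = tr_sig[OF m1 qd cardK] and tr_cube_E = tr_cube[OF m1 qd cardK]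
  and tr_zero_E = tr_zero[OF m1 qd cardK]
  and psi_add_E = psi_add[OF m1 qd cardK] and psi_zero_E = psi_zero[OF m1 qd cardK]
  and psi_eq1_E = psi_eq1[OF m1 qd cardK] and psi_pm_E = psi_pm[OF m1 qd cardK]
  and orth_E = orth[OF m1 qd cardK] and card_F_E = card_F[OF m1 qd cardK]
  and card_D_E = card_D[OF m1 qd cardK] and decomp_bij_E = decomp_bij[OF m1 qd cardK]
  and tr_nonzero_exists_E = tr_nonzero_exists[OF m1 qd cardK]
  and fermat3_E = fermat3[OF m1 qd cardK]

abbreviation FFE :: "'a set" where "FFE \<equiv> {u. u^q = u}"
abbreviation DDE :: "'a set" where "DDE \<equiv> {v. v^q = - v}"
abbreviation "TrE \<equiv> abs_trace (2*m)"
abbreviation "PsiE \<equiv> psi (2*m)"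

lemma two_mult: "2 * (t::'a) = t + t" by (rule mult_2)

lemma psi_tr: "TrE x = TrE (y::'a) \<Longrightarrow> PsiE x = PsiE y"
  unfolding psi_def by simp

lemma trD: "(v::'a)^q = -v \<Longrightarrow> TrE v = 0"
proof -
  assume v: "v^q = -v"
  have "- TrE v = TrE (-v)" by (rule tr_neg_E[symmetric])
  also have "\<dots> = TrE (v^q)" by (simp only: v)
  also have "\<dots> = TrE v" by (rule tr_sig_E)
  finally have "TrE v + TrE v = 0" by (simp add: eq_neg_iff_add_eq_0[symmetric])
  hence "2 * TrE v = 0" by (simp only: two_mult)
  thus ?thesis using two_ne0_E by simp
qed

lemma sumF:
  fixes \<mu> :: 'a
  shows "(\<Sum>u\<in>FFE. PsiE (u * \<mu>)) = (if \<mu> + \<mu>^q = 0 then of_nat q else 0)"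
proof (cases "\<mu> + \<mu>^q = 0")
  case True
  have "PsiE (u * \<mu>) = 1" if "u \<in> FFE" for u
  proof -
    have mq: "\<mu>^q = -\<mu>" using True by (simp add: eq_neg_iff_add_eq_0 add.commute)
    have "(u*\<mu>)^q = u^q * \<mu>^q" by (rule power_mult_distrib)
    also have "\<dots> = -(u*\<mu>)" using that mq by simp
    finally have "(u*\<mu>)^q = -(u*\<mu>)" .
    thus ?thesis using psi_eq1_E trD by blast
  qed
  thus ?thesis using True card_F_E by simp
next
  case False
  let ?r = "\<mu> + \<mu>^q"
  have rF: "?r^q = ?r" unfolding sig_add_E fermatq_E by (rule add.commute)
  obtain x0 :: 'a where x0: "TrE x0 \<noteq> 0" using tr_nonzero_exists_E by blast
  define u0 where "u0 = (x0 + x0^q) / ?r"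
  have u0F: "u0^q = u0" unfolding u0_def power_divide rF sig_add_E fermatq_E by (simp only: add.commute)
  have dec: "\<mu> = -?r + (\<mu>^q - \<mu>)"
  proof -
    have "-?r + (\<mu>^q - \<mu>) = -(2*\<mu>)" by simp
    also have "\<dots> = \<mu>" using two_eq_E by simp
    finally show ?thesis by simp
  qed
  have dD: "(u0 * (\<mu>^q - \<mu>))^q = -(u0 * (\<mu>^q - \<mu>))"
    unfolding power_mult_distrib u0F sig_diff_E fermatq_E by (simp add: algebra_simps)
  have "-(u0 * ?r) + u0 * (\<mu>^q - \<mu>) = -(2*(u0*\<mu>))" by (simp add: algebra_simps)
  also have "\<dots> = u0*\<mu>" using two_eq_E by simp
  finally have "TrE (u0 * \<mu>) = TrE (-(u0 * ?r)) + TrE (u0 * (\<mu>^q - \<mu>))"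
    using tr_add_E by metis
  also have "\<dots> = - TrE (x0 + x0^q)"
  proof -
    have ur: "u0 * ?r = x0 + x0^q" unfolding u0_def using False by simp
    show ?thesis unfolding ur trD[OF dD] tr_neg_E by simp
  qed
  also have "\<dots> = - (2 * TrE x0)" unfolding tr_add_E tr_sig_E two_mult ..
  also have "\<dots> = TrE x0" using two_eq_E by simp
  finally have "TrE (u0 * \<mu>) \<noteq> 0" using x0 by simp
  hence p: "PsiE (u0 * \<mu>) \<noteq> 1" using psi_eq1_E by simp
  have "(\<Sum>u\<in>FFE. PsiE (u * \<mu>)) = (\<Sum>u\<in>FFE. PsiE ((u + u0) * \<mu>))"
  proof (rule sum.reindex_bij_witness[of _ "\<lambda>x. x + u0" "\<lambda>x. x - u0"])
    show "\<And>a. a \<in> FFE \<Longrightarrow> a - u0 \<in> FFE" using sig_diff_E u0F by simp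
    show "\<And>a. a \<in> FFE \<Longrightarrow> a + u0 \<in> FFE" using sig_add_E u0F by simp
  qed auto
  also have "\<dots> = (\<Sum>u\<in>FFE. PsiE (u0 * \<mu>) * PsiE (u * \<mu>))"
    by (rule sum.cong[OF refl]) (unfold distrib_right psi_add_E, rule mult.commute)
  also have "\<dots> = PsiE (u0 * \<mu>) * (\<Sum>u\<in>FFE. PsiE (u * \<mu>))"
    by (simp add: sum_distrib_left)
  finally have "(1 - PsiE (u0 * \<mu>)) * (\<Sum>u\<in>FFE. PsiE (u * \<mu>)) = 0"
    by (simp add: algebra_simps)
  thus ?thesis using p False by simp
qed

lemma powq_comm: "((x::'a)^k)^q = (x^q)^k"
  by (simp add: power_mult[symmetric] mult.commute)

lemma W_formula:
  fixes a b :: 'a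
  assumes b: "b \<noteq> 0"
  defines "c \<equiv> inverse (b^(q+1))" and "e \<equiv> (inverse (b^(q+1)))^(3^(2*m-1))" and "a' \<equiv> a / b"
  shows "walsh (2*m) (\<lambda>x. x^(q+2)) a b
     = of_nat q * (\<Sum>v\<in>{v\<in>DDE. c * v^2 = e + a' + a'^q}. PsiE (-(a' * v)))"
proof -
  have bq: "b^(q+1) \<noteq> 0" using b by simp
  have cq: "c^q = c"
  proof -
    have hb: "(b^(q+1))^q = b^(q+1)"
    proof -
      have "(b^(q+1))^q = (b^q)^(q+1)" by (rule powq_comm)
      also have "\<dots> = (b^q)^q * b^q" by simp
      also have "\<dots> = b^(q+1)" using fermatq_E by (simp add: mult.commute)
      finally show ?thesis .
    qed
    show ?thesis unfolding c_def power_inverse hb ..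
  qed
  have e_c: "e = c^(3^(2*m-1))" unfolding e_def c_def ..
  have eq: "e^q = e" unfolding e_c powq_comm cq ..
  have e3: "e^3 = c"
  proof -
    have "e^3 = c^(3^(2*m-1)*3)" unfolding e_c by (simp add: power_mult)
    also have "3^(2*m-1)*3 = (3::nat)^(2*m)"
    proof -
      obtain k where k: "2*m = Suc k" using m1 by (cases "2*m") auto
      hence "2*m-1 = k" by simp
      thus ?thesis unfolding k by simp
    qed
    finally show ?thesis using fermat3_E by simp
  qed
  have "walsh (2*m) (\<lambda>x. x^(q+2)) a b = (\<Sum>x\<in>UNIV. PsiE (b * x^(q+2) - a * x))"
    by (simp only: walsh_def psi_def chi_def omega_def)
  also have "\<dots> = (\<Sum>y\<in>UNIV. PsiE (c * y^(q+2) - a' * y))"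
  proof (rule sum.reindex_bij_witness[of _ "\<lambda>y. y / b" "\<lambda>x. b * x"])
    fix x :: 'a
    have "c * (b*x)^(q+2) = (c * b^(q+1)) * b * x^(q+2)"
      by (simp add: power_mult_distrib mult.assoc mult.left_commute)
    also have "c * b^(q+1) = 1" unfolding c_def using bq by (rule left_inverse)
    finally have 1: "c * (b*x)^(q+2) = b * x^(q+2)" by simp
    have 2: "a' * (b * x) = a * x" unfolding a'_def using b by simp
    show "PsiE (c * (b * x)^(q+2) - a' * (b * x)) = PsiE (b * x^(q+2) - a * x)"
      unfolding 1 2 ..
  qed (use b in auto)
  also have "\<dots> = (\<Sum>p\<in>FFE \<times> DDE. PsiE (c * (fst p + snd p)^(q+2) - a' * (fst p + snd p)))"
    using sum.reindex_bij_betw[OF decomp_bij_E, of "\<lambda>y. PsiE (c * y^(q+2) - a' * y)"]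
    by (simp add: case_prod_beta)
  also have "\<dots> = (\<Sum>u\<in>FFE. \<Sum>v\<in>DDE. PsiE (c * (u + v)^(q+2) - a' * (u + v)))"
    by (simp add: sum.cartesian_product case_prod_beta)
  also have "\<dots> = (\<Sum>u\<in>FFE. \<Sum>v\<in>DDE. PsiE (u * (e - c*v^2 - a')) * PsiE (-(a' * v)))"
  proof (intro sum.cong refl)
    fix u v assume u: "u \<in> FFE" and v: "v \<in> DDE"
    have uq: "u^q = u" and vq: "v^q = -v" using u v by auto
    define w where "w = c * (u^2 * v - v^3)"
    have wD: "w^q = -w"
    proof -
      have "w^q = c^q * ((u^q)^2 * v^q - (v^q)^3)"
        unfolding w_def power_mult_distrib sig_diff_E powq_comm ..
      also have "\<dots> = -w" unfolding cq uq vq w_def by (simp add: algebra_simps)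
      finally show ?thesis .
    qed
    have pw: "(u+v)^(q+2) = (u - v) * (u + v)^2"
      by (simp only: power_add sig_add_E uq vq) (simp)
    have X: "c * (u+v)^(q+2) - a' * (u+v) = (e*u)^3 + ((u * (e - c*v^2 - a') + -(a' * v)) - e*u) + w"
      unfolding pw w_def e3[symmetric] by (simp add: algebra_simps power2_eq_square power3_eq_cube)
    have "TrE (c * (u+v)^(q+2) - a' * (u+v)) = TrE (u * (e - c*v^2 - a') + -(a' * v))"
      unfolding X tr_add_E tr_diff_E tr_cube_E trD[OF wD] by simp
    hence "PsiE (c * (u+v)^(q+2) - a' * (u+v)) = PsiE (u * (e - c*v^2 - a') + -(a' * v))"
      by (rule psi_tr)
    thus "PsiE (c * (u+v)^(q+2) - a' * (u+v)) = PsiE (u * (e - c*v^2 - a')) * PsiE (-(a' * v))"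
      unfolding psi_add_E .
  qed
  also have "\<dots> = (\<Sum>v\<in>DDE. \<Sum>u\<in>FFE. PsiE (u * (e - c*v^2 - a')) * PsiE (-(a' * v)))"
    by (rule sum.swap)
  also have "\<dots> = (\<Sum>v\<in>DDE. PsiE (-(a' * v)) * (\<Sum>u\<in>FFE. PsiE (u * (e - c*v^2 - a'))))"
    by (simp add: sum_distrib_left sum_distrib_right mult.commute[of "PsiE (-(a' * _))"])
  also have "\<dots> = (\<Sum>v\<in>DDE. if c * v^2 = e + a' + a'^q then of_nat q * PsiE (-(a' * v)) else 0)"
  proof (intro sum.cong refl)
    fix v assume v: "v \<in> DDE"
    let ?\<mu> = "e - c*v^2 - a'"
    have vq: "v^q = -v" using v by auto
    have "?\<mu>^q = e - c * v^2 - a'^q"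
      unfolding sig_diff_E power_mult_distrib eq cq powq_comm vq by simp
    hence d: "?\<mu> + ?\<mu>^q - (c*v^2 - (e + a' + a'^q)) = 3 * (e - c*v^2)"
      by (simp add: algebra_simps)
    have "?\<mu> + ?\<mu>^q - (c*v^2 - (e + a' + a'^q)) = 0" unfolding d char3_E by simp
    hence h: "?\<mu> + ?\<mu>^q = c*v^2 - (e + a' + a'^q)" by (simp only: right_minus_eq)
    hence "(?\<mu> + ?\<mu>^q = 0) = (c * v^2 = e + a' + a'^q)" by (simp only: h right_minus_eq)
    thus "PsiE (-(a' * v)) * (\<Sum>u\<in>FFE. PsiE (u * ?\<mu>)) = (if c * v^2 = e + a' + a'^q then of_nat q * PsiE (-(a' * v)) else 0)"
      unfolding sumF by simp
  qed
  also have "\<dots> = of_nat q * (\<Sum>v\<in>{v\<in>DDE. c * v^2 = e + a' + a'^q}. PsiE (-(a' * v)))"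
    by (simp add: sum.inter_filter[symmetric] sum_distrib_left)
  finally show ?thesis .
qed

end

lemma sum_vals4:
  fixes h :: "'b \<Rightarrow> complex" and g :: "complex \<Rightarrow> complex"
  assumes fin: "finite A" and hv: "\<forall>a\<in>A. h a \<in> {v1,v2,v3,v4}" and dist: "distinct [v1,v2,v3,v4]"
  shows "(\<Sum>a\<in>A. g (h a)) = g v1 * of_nat (card {a\<in>A. h a = v1}) + g v2 * of_nat (card {a\<in>A. h a = v2})
          + g v3 * of_nat (card {a\<in>A. h a = v3}) + g v4 * of_nat (card {a\<in>A. h a = v4})"
proof -
  let ?S = "{v1,v2,v3,v4}"
  have "(\<Sum>a\<in>A. g (h a)) = (\<Sum>a\<in>A. \<Sum>v\<in>?S. if h a = v then g v else 0)"
  proof (rule sum.cong[OF refl])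
    fix a assume "a \<in> A"
    hence "h a \<in> ?S" using hv by blast
    thus "g (h a) = (\<Sum>v\<in>?S. if h a = v then g v else 0)"
      by (subst sum.delta') auto
  qed
  also have "\<dots> = (\<Sum>v\<in>?S. \<Sum>a\<in>A. if h a = v then g v else 0)"
    by (rule sum.swap)
  also have "\<dots> = (\<Sum>v\<in>?S. g v * of_nat (card {a\<in>A. h a = v}))"
  proof (rule sum.cong[OF refl])
    fix v
    have "(\<Sum>a\<in>A. if h a = v then g v else 0) = (\<Sum>a\<in>{a\<in>A. h a = v}. g v)"
      using sum.inter_filter[OF fin, of "\<lambda>_. g v" "\<lambda>a. h a = v"] by simp
    thus "(\<Sum>a\<in>A. if h a = v then g v else 0) = g v * of_nat (card {a\<in>A. h a = v})"
      by (simp add: mult.commute)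
  qed
  also have "\<dots> = g v1 * of_nat (card {a\<in>A. h a = v1}) + g v2 * of_nat (card {a\<in>A. h a = v2})
          + g v3 * of_nat (card {a\<in>A. h a = v3}) + g v4 * of_nat (card {a\<in>A. h a = v4})"
    using dist by (simp add: add.assoc)
  finally show ?thesis .
qed

context
  fixes m q :: nat
  assumes m1: "m \<ge> 1" and qd: "q = 3^m" and cardK: "card (UNIV::'a::{field,finite} set) = q^2"
begin

lemmas sig_add_F = sig_add[OF m1 qd cardK] and sig_neg_F = sig_neg[OF m1 qd cardK]
  and sig_diff_F = sig_diff[OF m1 qd cardK] and fermatq_F = fermatq[OF m1 qd cardK]
  and two_eq_F = two_eq[OF m1 qd cardK] and two_ne0_F = two_ne0[OF m1 qd cardK]
  and char3_F = char3[OF m1 qd cardK] 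
  and psi_add_F = psi_add[OF m1 qd cardK] and psi_zero_F = psi_zero[OF m1 qd cardK]
  and psi_pm_F = psi_pm[OF m1 qd cardK]
  and orth_F = orth[OF m1 qd cardK] and card_D_F = card_D[OF m1 qd cardK]
  and W_formula_F = W_formula[OF m1 qd cardK] and q_ge3_F = q_ge3[OF m1 qd cardK]
  and powq_comm_F = powq_comm[OF m1 qd cardK]

abbreviation DDF :: "'a set" where "DDF \<equiv> {v. v^q = - v}"
abbreviation "PsiF \<equiv> psi (2*m)"

lemma G_vals:
  fixes c \<gamma> a' :: 'a
  assumes c: "c \<noteq> 0"
  defines "G \<equiv> (\<Sum>v\<in>{v\<in>DDF. c * v^2 = \<gamma>}. PsiF (-(a' * v)))"
  shows "(\<gamma> = 0 \<longrightarrow> G = 1) \<and> (\<gamma> \<noteq> 0 \<longrightarrow> G = 0 \<or> G = 2 \<or> G = -1)"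
proof (intro conjI impI)
  assume g: "\<gamma> = 0"
  have "0 \<in> DDF" using q_ge3_F by (simp add: power_0_left)
  hence "{v\<in>DDF. c * v^2 = \<gamma>} = {0}" using g c by auto
  thus "G = 1" unfolding G_def using psi_zero_F by simp
next
  assume g: "\<gamma> \<noteq> 0"
  show "G = 0 \<or> G = 2 \<or> G = -1"
  proof (cases "{v\<in>DDF. c * v^2 = \<gamma>} = {}")
    case True
    have "G = 0" unfolding G_def True by (rule sum.empty)
    thus ?thesis by simp
  next
    case False
    then obtain v0 where v0: "v0 \<in> DDF" "c * v0^2 = \<gamma>" by blast
    have v0nz: "v0 \<noteq> 0" using v0 g by auto
    have v0q: "v0^q = -v0" using v0(1) by blast
    have "(-v0)^q = -(-v0)" by (simp only: sig_neg_F v0q)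
    hence mv0: "-v0 \<in> DDF" by blast
    have ne: "v0 \<noteq> -v0"
    proof
      assume "v0 = -v0" hence "v0 + v0 = 0" by (simp only: eq_neg_iff_add_eq_0)
      hence "2 * v0 = 0" by (simp only: mult_2)
      thus False using two_ne0_F v0nz by simp
    qed
    have "{v\<in>DDF. c * v^2 = \<gamma>} = {v0, -v0}"
    proof (intro set_eqI iffI)
      fix v assume "v \<in> {v\<in>DDF. c * v^2 = \<gamma>}"
      hence "c * v^2 = c * v0^2" using v0 by simp
      hence "v^2 = v0^2" using c by simp
      thus "v \<in> {v0, -v0}" by (simp add: power2_eq_iff)
    next
      fix v assume "v \<in> {v0, -v0}"
      hence "v = v0 \<or> v = -v0" by blast
      moreover have "c * (-v0)^2 = \<gamma>" using v0(2) by (simp only: power2_minus)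
      ultimately show "v \<in> {v\<in>DDF. c * v^2 = \<gamma>}" using v0 mv0 by blast
    qed
    hence "G = PsiF (-(a' * v0)) + PsiF (a' * v0)" unfolding G_def using ne by simp
    also have "\<dots> = PsiF (a' * v0) + PsiF (-(a' * v0))" by (rule add.commute)
    also have "\<dots> = (if abs_trace (2*m) (a' * v0) = 0 then 2 else -1)" by (rule psi_pm_F)
    finally show ?thesis by simp
  qed
qed

lemma q_pos: "q > 0" using q_ge3_F by simp

lemma W_char:
  fixes a b :: 'a
  assumes b: "b \<noteq> 0"
  defines "e \<equiv> (inverse (b^(q+1)))^(3^(2*m-1))"
  shows "(walsh (2*m) (\<lambda>x. x^(q+2)) a b = of_nat q \<longleftrightarrow> e + a/b + (a/b)^q = 0)
       \<and> walsh (2*m) (\<lambda>x. x^(q+2)) a b \<in> {- of_nat q, 0, of_nat q, 2 * of_nat q}"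
proof -
  let ?c = "inverse (b^(q+1))"
  let ?\<gamma> = "e + a/b + (a/b)^q"
  let ?G = "\<Sum>v\<in>{v\<in>DDF. ?c * v^2 = ?\<gamma>}. PsiF (-((a/b) * v))"
  have W: "walsh (2*m) (\<lambda>x. x^(q+2)) a b = of_nat q * ?G"
    unfolding e_def by (rule W_formula_F[OF b])
  have c: "?c \<noteq> 0" using b by simp
  have G: "(?\<gamma> = 0 \<longrightarrow> ?G = 1) \<and> (?\<gamma> \<noteq> 0 \<longrightarrow> ?G = 0 \<or> ?G = 2 \<or> ?G = -1)"
    by (rule G_vals[OF c])
  have qnz: "(of_nat q :: complex) \<noteq> 0" using q_pos by simp
  show ?thesis
  proof (cases "?\<gamma> = 0")
    case True
    then show ?thesis using G W by simp
  next
    case False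
    hence "?G = 0 \<or> ?G = 2 \<or> ?G = -1" using G by blast
    moreover have "of_nat q * (2::complex) \<noteq> of_nat q" "of_nat q * (-1::complex) \<noteq> of_nat q"
      using qnz by (simp_all add: mult_cancel_left1)
    ultimately show ?thesis using W False qnz by (auto simp: mult.commute)
  qed
qed

lemma count_q:
  fixes b :: 'a
  assumes b: "b \<noteq> 0"
  shows "card {a. walsh (2*m) (\<lambda>x. x^(q+2)) a b = of_nat q} = q"
proof -
  define e where "e = (inverse (b^(q+1)))^(3^(2*m-1))"
  have S: "{a. walsh (2*m) (\<lambda>x. x^(q+2)) a b = of_nat q} = {a. e + a/b + (a/b)^q = 0}"
    using W_char[OF b] unfolding e_def by blast
  have eq: "e^q = e"
  proof -
    have hb: "(b^(q+1))^q = b^(q+1)"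
    proof -
      have "(b^(q+1))^q = (b^q)^(q+1)" by (rule powq_comm_F)
      also have "\<dots> = (b^q)^q * b^q" by simp
      also have "\<dots> = b^(q+1)" using fermatq_F by (simp add: mult.commute)
      finally show ?thesis .
    qed
    have "e^q = (inverse ((b^(q+1))^q))^(3^(2*m-1))"
      unfolding e_def power_inverse by (simp add: power_mult[symmetric] mult.commute)
    thus ?thesis unfolding hb e_def .
  qed
  have "bij_betw (\<lambda>d. b * (d + e)) DDF {a. e + a/b + (a/b)^q = 0}"
  proof (rule bij_betw_byWitness[where f' = "\<lambda>a. a/b - e"])
    show "\<forall>d\<in>DDF. b * (d + e) / b - e = d" using b by simp
    show "\<forall>a\<in>{a. e + a/b + (a/b)^q = 0}. b * (a/b - e + e) = a" using b by simp
    show "(\<lambda>d. b * (d + e)) ` DDF \<subseteq> {a. e + a/b + (a/b)^q = 0}"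
    proof clarify
      fix d :: 'a assume d: "d^q = -d"
      have "e + b * (d + e) / b + (b * (d + e) / b)^q = e + (d + e) + (d^q + e^q)"
        using b by (simp add: sig_add_F)
      also have "\<dots> = 3 * e" unfolding d eq by simp
      also have "\<dots> = 0" unfolding char3_F by simp
      finally show "e + b * (d + e) / b + (b * (d + e) / b)^q = 0" .
    qed
    show "(\<lambda>a. a/b - e) ` {a. e + a/b + (a/b)^q = 0} \<subseteq> DDF"
    proof clarify
      fix a :: 'a assume h: "e + a/b + (a/b)^q = 0"
      have aq: "(a/b)^q = -e - a/b" using h by (simp add: eq_neg_iff_add_eq_0 algebra_simps)
      have "(a/b - e)^q = -e - a/b - e" unfolding sig_diff_F aq eq ..
      also have "\<dots> = -(a/b - e) - 3 * e" by simp
      also have "\<dots> = -(a/b - e)" unfolding char3_F by simp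
      finally show "(a/b - e)^q = -(a/b - e)" .
    qed
  qed
  hence "card DDF = card {a. e + a/b + (a/b)^q = 0}" by (rule bij_betw_same_card)
  thus ?thesis using S card_D_F by simp
qed

lemma walsh_psi: "walsh (2*m) f a b = (\<Sum>x\<in>UNIV. PsiF (b * f x - a * (x::'a)))"
  by (simp only: walsh_def psi_def chi_def omega_def)

lemma psi_split: "PsiF (B - a * (x::'a)) = PsiF B * PsiF ((-x) * a)"
proof -
  have "B - a * x = B + (-x) * a" by simp
  thus ?thesis by (simp only: psi_add_F)
qed

lemma M1:
  fixes b :: 'a
  shows "(\<Sum>a\<in>UNIV. walsh (2*m) (\<lambda>x. x^(q+2)) a b) = of_nat (q^2)"
proof -
  have "(\<Sum>a\<in>UNIV. walsh (2*m) (\<lambda>x. x^(q+2)) a b)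
      = (\<Sum>a\<in>UNIV. \<Sum>x\<in>UNIV. PsiF (b * x^(q+2)) * PsiF ((-x) * a))"
    by (simp only: walsh_psi psi_split)
  also have "\<dots> = (\<Sum>x\<in>UNIV. PsiF (b * x^(q+2)) * (\<Sum>a\<in>UNIV. PsiF ((-x) * a)))"
    by (subst sum.swap) (simp only: sum_distrib_left)
  also have "\<dots> = (\<Sum>x\<in>UNIV. if x = 0 then PsiF (b * x^(q+2)) * of_nat (q^2) else 0)"
    by (rule sum.cong[OF refl]) (simp only: orth_F neg_equal_0_iff_equal, simp)
  also have "\<dots> = PsiF (b * 0^(q+2)) * of_nat (q^2)"
    by (simp only: sum.delta finite UNIV_I if_True)
  also have "\<dots> = of_nat (q^2)" using psi_zero_F by (simp add: power_0_left)
  finally show ?thesis .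
qed

lemma q_odd: "odd q" using qd by simp

lemma M2:
  fixes b :: 'a
  shows "(\<Sum>a\<in>UNIV. (walsh (2*m) (\<lambda>x. x^(q+2)) a b)^2) = of_nat (q^4)"
proof -
  let ?P = "\<lambda>x. PsiF (b * x^(q+2))"
  have "(\<Sum>a\<in>UNIV. (walsh (2*m) (\<lambda>x. x^(q+2)) a b)^2)
      = (\<Sum>a\<in>UNIV. (\<Sum>x\<in>UNIV. ?P x * PsiF ((-x) * a)) * (\<Sum>y\<in>UNIV. ?P y * PsiF ((-y) * a)))"
    by (simp only: walsh_psi psi_split power2_eq_square)
  also have "\<dots> = (\<Sum>a\<in>UNIV. \<Sum>x\<in>UNIV. \<Sum>y\<in>UNIV. (?P x * ?P y) * PsiF ((-(x + y)) * a))"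
  proof (rule sum.cong[OF refl])
    fix a :: 'a
    have "\<And>x y. (?P x * PsiF ((-x) * a)) * (?P y * PsiF ((-y) * a)) = (?P x * ?P y) * PsiF ((-(x + y)) * a)"
    proof -
      fix x y :: 'a
      have "(-(x + y)) * a = (-x) * a + (-y) * a" by (simp add: algebra_simps)
      hence "PsiF ((-(x + y)) * a) = PsiF ((-x) * a) * PsiF ((-y) * a)" by (simp only: psi_add_F)
      thus "(?P x * PsiF ((-x) * a)) * (?P y * PsiF ((-y) * a)) = (?P x * ?P y) * PsiF ((-(x + y)) * a)"
        by (simp only: mult_ac)
    qed
    thus "(\<Sum>x\<in>UNIV. ?P x * PsiF ((-x) * a)) * (\<Sum>y\<in>UNIV. ?P y * PsiF ((-y) * a))
        = (\<Sum>x\<in>UNIV. \<Sum>y\<in>UNIV. (?P x * ?P y) * PsiF ((-(x + y)) * a))"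
      by (simp only: sum_product)
  qed
  also have "\<dots> = (\<Sum>x\<in>UNIV. \<Sum>y\<in>UNIV. (?P x * ?P y) * (\<Sum>a\<in>UNIV. PsiF ((-(x + y)) * a)))"
    by (subst sum.swap, rule sum.cong[OF refl], subst sum.swap, simp only: sum_distrib_left)
  also have "\<dots> = (\<Sum>x\<in>UNIV. \<Sum>y\<in>UNIV. if y = -x then (?P x * ?P y) * of_nat (q^2) else 0)"
  proof (intro sum.cong refl)
    fix x y :: 'a
    have "(-(x + y) = 0) = (y = -x)" by (simp only: neg_equal_0_iff_equal add_eq_0_iff)
    thus "(?P x * ?P y) * (\<Sum>a\<in>UNIV. PsiF ((-(x + y)) * a)) = (if y = -x then (?P x * ?P y) * of_nat (q^2) else 0)"
      by (simp only: orth_F) simp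
  qed
  also have "\<dots> = (\<Sum>x\<in>UNIV. (?P x * ?P (-x)) * of_nat (q^2))"
    by (simp only: sum.delta finite UNIV_I if_True)
  also have "\<dots> = (\<Sum>x\<in>(UNIV::'a set). (of_nat (q^2)::complex))"
  proof (rule sum.cong[OF refl])
    fix x :: 'a
    have "odd (q+2)" using q_odd by simp
    hence "(-x)^(q+2) = -(x^(q+2))" by (rule power_minus_odd)
    hence z: "b * x^(q+2) + b * (-x)^(q+2) = 0" by simp
    have "?P x * ?P (-x) = PsiF (b * x^(q+2) + b * (-x)^(q+2))" by (rule psi_add_F[symmetric])
    hence "?P x * ?P (-x) = 1" unfolding z psi_zero_F .
    thus "(?P x * ?P (-x)) * of_nat (q^2) = of_nat (q^2)" by simp
  qed
  also have "\<dots> = of_nat (q^4)" using cardK by (simp add: power_mult[symmetric])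
  finally show ?thesis .
qed

end

lemma card_pairs:
  fixes P :: "'a::{zero,finite} \<Rightarrow> 'a \<Rightarrow> bool"
  shows "card {(a, b). b \<noteq> 0 \<and> P a b} = (\<Sum>b\<in>UNIV - {0}. card {a. P a b})"
proof -
  have "{(a, b). b \<noteq> 0 \<and> P a b} = (\<lambda>(b,a). (a,b)) ` (SIGMA b:UNIV - {0}. {a. P a b})"
    by auto
  moreover have "inj_on (\<lambda>(b,a). (a,b)) (SIGMA b:UNIV - {0}. {a. P a b})"
    by (auto simp: inj_on_def)
  ultimately have "card {(a, b). b \<noteq> 0 \<and> P a b} = card (SIGMA b:UNIV - {0}. {a. P a b})"
    by (simp add: card_image)
  also have "\<dots> = (\<Sum>b\<in>UNIV - {0}. card {a. P a b})"
    by (rule card_SigmaI) auto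
  finally show ?thesis .
qed

context
  fixes m q :: nat
  assumes m1: "m \<ge> 1" and qd: "q = 3^m" and cardK: "card (UNIV::'a::{field,finite} set) = q^2"
begin

lemmas W_char_G = W_char[OF m1 qd cardK] and M1_G = M1[OF m1 qd cardK] and M2_G = M2[OF m1 qd cardK]
  and count_q_G = count_q[OF m1 qd cardK] and q_pos_G = q_pos[OF m1 qd cardK]

lemma per_b:
  fixes b :: 'a
  assumes b: "b \<noteq> 0"
  defines "N \<equiv> \<lambda>v. card {a. walsh (2*m) (\<lambda>x. x^(q+2)) a b = v}"
  shows "real (N (- of_nat q)) = (real q ^ 2 - real q) / 3
       \<and> real (N 0) = (real q ^ 2 - real q) / 2
       \<and> N (of_nat q) = q
       \<and> real (N (2 * of_nat q)) = (real q ^ 2 - real q) / 6"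
proof -
  let ?h = "\<lambda>a. walsh (2*m) (\<lambda>x. x^(q+2)) a b"
  have qnz: "(of_nat q :: complex) \<noteq> 0" using q_pos_G by simp
  have hv: "\<forall>a\<in>UNIV. ?h a \<in> {- of_nat q, 0, of_nat q, 2 * of_nat q}" using W_char_G[OF b] by blast
  have dist: "distinct [- of_nat q, 0, of_nat q, 2 * (of_nat q :: complex)]"
    using qnz by (auto simp: minus_equation_iff)
  have Nd: "\<And>v. card {a\<in>UNIV. ?h a = v} = N v" unfolding N_def by simp
  note sv = sum_vals4[OF finite_UNIV hv dist, unfolded Nd]
  have E0: "of_nat (q^2) = of_nat (N (- of_nat q)) + of_nat (N 0) + of_nat (N (of_nat q)) + (of_nat (N (2 * of_nat q)) :: complex)"
    using sv[of "\<lambda>_. 1"] cardK by simp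
  have E1: "of_nat (q^2) = - of_nat q * of_nat (N (- of_nat q)) + of_nat q * of_nat (N (of_nat q)) + 2 * of_nat q * (of_nat (N (2 * of_nat q)) :: complex)"
    using sv[of "\<lambda>z. z"] M1_G[of b] by simp
  have E2: "of_nat (q^4) = (of_nat q)^2 * of_nat (N (- of_nat q)) + (of_nat q)^2 * of_nat (N (of_nat q)) + (2 * of_nat q)^2 * (of_nat (N (2 * of_nat q)) :: complex)"
    using sv[of "\<lambda>z. z^2"] M2_G[of b] by simp
  have N3: "N (of_nat q) = q" unfolding N_def by (rule count_q_G[OF b])
  define n1 where "n1 = N (- of_nat q)"
  define n0 where "n0 = N 0"
  define n2 where "n2 = N (2 * of_nat q)"
  have e0: "q^2 = n1 + n0 + q + n2"
  proof -
    have "(of_nat (q^2) :: complex) = of_nat (n1 + n0 + q + n2)"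
      using E0 N3 unfolding n1_def n0_def n2_def by simp
    thus ?thesis by (simp only: of_nat_eq_iff)
  qed
  have e1: "q^2 + q * n1 = q * q + 2 * q * n2"
  proof -
    have "(of_nat (q^2 + q * n1) :: complex) = of_nat (q * q + 2 * q * n2)"
      using E1 N3 unfolding n1_def n2_def by (simp add: algebra_simps)
    thus ?thesis by (simp only: of_nat_eq_iff)
  qed
  have e2: "q^4 = q^2 * n1 + q^2 * q + 4 * q^2 * n2"
  proof -
    have "(of_nat (q^4) :: complex) = of_nat (q^2 * n1 + q^2 * q + 4 * q^2 * n2)"
      using E2 N3 unfolding n1_def n2_def by (simp add: algebra_simps power_mult_distrib)
    thus ?thesis by (simp only: of_nat_eq_iff)
  qed
  have r1: "n1 = 2 * n2"
  proof -
    have "q * (q + n1) = q * (q + 2 * n2)" using e1 by (simp add: algebra_simps power2_eq_square)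
    thus ?thesis using q_pos_G by simp
  qed
  have r2: "q^2 = n1 + q + 4 * n2"
  proof -
    have h: "q^2 * q^2 = q^2 * (n1 + q + 4 * n2)" using e2 by (simp add: algebra_simps power4_eq_xxxx power2_eq_square)
    have nz: "q^2 \<noteq> 0" using q_pos_G by simp
    show ?thesis using mult_left_cancel[OF nz] h by blast
  qed
  have R0: "real q ^ 2 = real n1 + real n0 + real q + real n2" using e0 by (metis of_nat_add of_nat_power)
  have R1: "real n1 = 2 * real n2" using r1 by simp
  have R2: "real q ^ 2 = real n1 + real q + 4 * real n2" using r2 by (metis of_nat_add of_nat_power of_nat_mult of_nat_numeral)
  show ?thesis unfolding n1_def[symmetric] n0_def[symmetric] n2_def[symmetric] N3
    using R0 R1 R2 by simp
qed

end

theorem theorem9: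
  fixes m :: nat and q :: nat and f :: "'a::{field,finite} \<Rightarrow> 'a"
  assumes f_def: "f = (\<lambda>x. x ^ (q + 2))"
    and "m \<ge> 1"
    and "q = 3 ^ m"
    and "card (UNIV :: 'a set) = q ^ 2"
  defines "W \<equiv> (\<lambda>a b. walsh (2 * m) f a b)"
  shows "real (card {(a, b). b \<noteq> 0 \<and> W a b = - of_nat q})
           = (real q ^ 4 - real q ^ 3 - real q ^ 2 + real q) / 3
         \<and> real (card {(a, b). b \<noteq> 0 \<and> W a b = 0})
           = (real q ^ 4 - real q ^ 3 - real q ^ 2 + real q) / 2
         \<and> real (card {(a, b). b \<noteq> 0 \<and> W a b = of_nat q})
           = real q ^ 3 - real q
         \<and> real (card {(a, b). b \<noteq> 0 \<and> W a b = 2 * of_nat q})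
           = (real q ^ 4 - real q ^ 3 - real q ^ 2 + real q) / 6"
proof -
  note pb = per_b[OF assms(2) assms(3) assms(4)]
  have q1: "q^2 \<ge> 1" using assms(3) by simp
  have cU: "real (card (UNIV - {0::'a})) = real q ^ 2 - 1"
  proof -
    have "card (UNIV - {0::'a}) = q^2 - 1" using assms(4) by (simp add: card_Diff_singleton)
    thus ?thesis using q1 by (simp add: of_nat_diff)
  qed
  have key: "real (card {(a, b). b \<noteq> 0 \<and> W a b = V}) = (real q ^ 2 - 1) * r"
    if h: "\<And>b. b \<noteq> 0 \<Longrightarrow> real (card {a. W a b = V}) = r" for V r
  proof -
    have "real (card {(a, b). b \<noteq> 0 \<and> W a b = V}) = (\<Sum>b\<in>UNIV - {0::'a}. real (card {a. W a b = V}))"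
      using card_pairs[of "\<lambda>a b. W a b = V"] by simp
    also have "\<dots> = (\<Sum>b\<in>UNIV - {0::'a}. r)" using h by (intro sum.cong) auto
    also have "\<dots> = (real q ^ 2 - 1) * r" using cU by simp
    finally show ?thesis .
  qed
  have Wd: "W = (\<lambda>a b. walsh (2 * m) (\<lambda>x. x ^ (q + 2)) a b)" unfolding W_def f_def ..
  have k1: "real (card {(a, b). b \<noteq> 0 \<and> W a b = - of_nat q}) = (real q ^ 2 - 1) * ((real q ^ 2 - real q) / 3)"
    by (rule key) (use pb in \<open>simp add: Wd\<close>)
  have k2: "real (card {(a, b). b \<noteq> 0 \<and> W a b = 0}) = (real q ^ 2 - 1) * ((real q ^ 2 - real q) / 2)"
    by (rule key) (use pb in \<open>simp add: Wd\<close>)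
  have k3: "real (card {(a, b). b \<noteq> 0 \<and> W a b = of_nat q}) = (real q ^ 2 - 1) * real q"
    by (rule key) (use pb in \<open>simp add: Wd\<close>)
  have k4: "real (card {(a, b). b \<noteq> 0 \<and> W a b = 2 * of_nat q}) = (real q ^ 2 - 1) * ((real q ^ 2 - real q) / 6)"
    by (rule key) (use pb in \<open>simp add: Wd\<close>)
  have p: "(real q ^ 2 - 1) * (real q ^ 2 - real q) = real q ^ 4 - real q ^ 3 - real q ^ 2 + real q"
    by (simp add: algebra_simps power2_eq_square power3_eq_cube power4_eq_xxxx)
  show ?thesis
    unfolding k1 k2 k3 k4 using p
    by (simp add: field_simps power2_eq_square power3_eq_cube power4_eq_xxxx)
qed

end
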